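(* Let $0.5208<\sigma_0<0.9723$, $10^3\le H<H_0$ with $H_0=3.061\cdot10^{10}$, and $T\ge H_0$. Then \[ \frac{2}{T-H}\int_H^T\sum_{1\le n<m<t}\frac{\cos(t\log(m/n))}{(nm)^{\sigma_0}}\,dt\le \epsilon_1(\sigma_0,H). \]
   Context: Here $H_0=3.061\cdot10^{10}$, $\zeta$ is the Riemann zeta function, and \[ \epsilon_1(\sigma_0,H)=\frac{4H_0}{H_0-H}\Big(\frac{(\log H_0)H_0^{1-2\sigma_0}}{2(1-\sigma_0)}-\frac{(2\sigma_0-1)\log H_0}{2(1-\sigma_0)H_0}+\frac{\max\big(0,\frac{1-3\sigma_0+3\sigma_0^2}{2(1-\sigma_0)^2}-\frac{\zeta(2\sigma_0)}{2}\big)}{H_0}+\frac{(2-\sigma_0)H_0^{1-2\sigma_0}}{2(1-\sigma_0)^2}-\frac{\sigma_0H_0^{-\sigma_0}}{(1-\sigma_0)^2}+\frac{H_0^{-2\sigma_0}}{2(2\sigma_0-1)}+\frac{H_0^{-2\sigma_0-1}}{2}\Big). \] The inner sum is over pairs of integers $(n,m)$ with $1\le n<m<t$. *)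

theory Defs
  imports "HOL-Analysis.Analysis"
begin

definition H0 :: real where
  "H0 = 3.061 * 10 ^ 10"

definition zeta_real :: "real \<Rightarrow> real" where
  "zeta_real s = (\<Sum>n. 1 / (real (Suc n)) powr s)"

definition eps1 :: "real \<Rightarrow> real \<Rightarrow> real" where
  "eps1 \<sigma> H = 4 * H0 / (H0 - H) *
     ( (ln H0) * H0 powr (1 - 2*\<sigma>) / (2 * (1 - \<sigma>))
     - (2*\<sigma> - 1) * ln H0 / (2 * (1 - \<sigma>) * H0)
     + max 0 ((1 - 3*\<sigma> + 3*\<sigma>^2) / (2 * (1 - \<sigma>)^2) - zeta_real (2*\<sigma>) / 2) / H0
     + (2 - \<sigma>) * H0 powr (1 - 2*\<sigma>) / (2 * (1 - \<sigma>)^2)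
     - \<sigma> * H0 powr (-\<sigma>) / (1 - \<sigma>)^2
     + H0 powr (-2*\<sigma>) / (2 * (2*\<sigma> - 1))
     + H0 powr (-2*\<sigma> - 1) / 2 )"

definition Ssum :: "real \<Rightarrow> real \<Rightarrow> real" where
  "Ssum \<sigma> t = (\<Sum>(n,m)\<in>{(n::nat, m::nat). 1 \<le> n \<and> n < m \<and> real m < t}.
      cos (t * ln (real m / real n)) / (real n * real m) powr \<sigma>)"

end

theory Submission
  imports Defs "HOL-Analysis.Analysis"
begin


lemma pow_step:
  fixes x r :: real assumes x: "0 < x" and r: "r < 1" "r \<noteq> 0"
  shows "(x+1) powr (r-1) \<le> ((x+1) powr r - x powr r) / r"
proof -
  have "\<exists>z. x < z \<and> z < x+1 \<and> ((x+1) powr r - x powr r = ((x+1) - x) * (r * z powr (r-1)))"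
    by (rule MVT2) (use x in \<open>auto intro!: has_real_derivative_powr\<close>)
  then obtain z where z: "x < z" "z < x+1" "(x+1) powr r - x powr r = r * z powr (r-1)" by auto
  have "(x+1) powr (r-1) \<le> z powr (r-1)"
    by (rule powr_mono2') (use r x z in auto)
  also have "\<dots> = ((x+1) powr r - x powr r) / r" using z r by simp
  finally show ?thesis .
qed

lemma sum_pow_bound:
  fixes q :: real assumes q: "0 < q" "q < 1" and N: "1 \<le> N"
  shows "(\<Sum>n\<in>{1..N}. real n powr (-q)) \<le> (real N powr (1-q) - q)/(1-q)"
  using N
proof (induction N rule: nat_induct_at_least)
  case base
  then show ?case using q by simp
next
  case (Suc N)
  have st: "(real N + 1) powr ((1-q)-1) \<le> ((real N+1) powr (1-q) - real N powr (1-q)) / (1-q)"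
    by (rule pow_step) (use Suc q in auto)
  have "(\<Sum>n\<in>{1..Suc N}. real n powr (-q)) = (\<Sum>n\<in>{1..N}. real n powr (-q)) + (real N + 1) powr (-q)"
    using Suc by (simp add: add.commute)
  also have "\<dots> \<le> (real N powr (1-q) - q)/(1-q) + ((real N+1) powr (1-q) - real N powr (1-q)) / (1-q)"
    using Suc.IH st by simp
  also have "\<dots> = (real (Suc N) powr (1-q) - q)/(1-q)"
    unfolding add_divide_distrib[symmetric] by (simp add: add.commute)
  finally show ?case .
qed

lemma ln_step:
  fixes x :: real assumes x: "0 < x"
  shows "1/(x+1) \<le> ln (x+1) - ln x"
proof -
  have "ln (x/(x+1)) \<le> x/(x+1) - 1" by (rule ln_le_minus_one) (use x in auto)
  also have "x/(x+1) - 1 = -(1/(x+1))" using x by (simp add: field_simps)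
  finally show ?thesis using x by (simp add: ln_div)
qed

lemma harm_bound:
  assumes K: "1 \<le> K"
  shows "(\<Sum>k\<in>{1..K}. 1/real k) \<le> 1 + ln (real K)"
  using K
proof (induction K rule: nat_induct_at_least)
  case base
  then show ?case by simp
next
  case (Suc K)
  have st: "1/(real K + 1) \<le> ln (real K + 1) - ln (real K)" by (rule ln_step) (use Suc in auto)
  have "(\<Sum>k\<in>{1..Suc K}. 1/real k) = (\<Sum>k\<in>{1..K}. 1/real k) + 1/(real K + 1)"
    using Suc by (simp add: add.commute)
  also have "\<dots> \<le> 1 + ln (real (Suc K))" using Suc.IH st by (simp add: add.commute)
  finally show ?case .
qed

lemma tail_bound:
  fixes p :: real assumes p: "1 < p" and M: "1 \<le> M"
  shows "(\<Sum>j<K. real (j+M) powr (-p)) \<le> real M powr (-p) + real M powr (1-p)/(p-1)"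
proof -
  have main: "(\<Sum>j<Suc K. real (j+M) powr (-p)) \<le> real M powr (-p) + (real M powr (1-p) - real (K+M) powr (1-p))/(p-1)" for K
  proof (induction K)
    case 0 then show ?case by simp
  next
    case (Suc K)
    have st: "(real (K+M) + 1) powr ((1-p)-1) \<le> ((real (K+M)+1) powr (1-p) - real (K+M) powr (1-p)) / (1-p)"
      by (rule pow_step) (use p M in auto)
    have e: "real (Suc K + M) = real (K+M) + 1" by simp
    have "(\<Sum>j<Suc (Suc K). real (j+M) powr (-p)) = (\<Sum>j<Suc K. real (j+M) powr (-p)) + (real (K+M) + 1) powr (-p)"
      by (simp add: ac_simps)
    also have "\<dots> \<le> real M powr (-p) + (real M powr (1-p) - real (K+M) powr (1-p))/(p-1)
         + ((real (K+M)+1) powr (1-p) - real (K+M) powr (1-p)) / (1-p)"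
      using Suc.IH st by simp
    also have "\<dots> = real M powr (-p) + (real M powr (1-p) - real (Suc K+M) powr (1-p))/(p-1)"
    proof -
      have "((real (K+M)+1) powr (1-p) - real (K+M) powr (1-p)) / (1-p)
           = (real (K+M) powr (1-p) - (real (K+M)+1) powr (1-p)) / (p-1)"
        using p by (simp add: field_simps)
      then show ?thesis unfolding e add_divide_distrib[symmetric] by (simp add: diff_divide_distrib)
    qed
    finally show ?case .
  qed
  show ?thesis
  proof (cases K)
    case 0 then show ?thesis using p by simp
  next
    case (Suc K')
    have "0 \<le> real (K'+M) powr (1-p) / (p-1)" using p by simp
    moreover have "(\<Sum>j<K. real (j+M) powr (-p)) \<le> real M powr (-p) + (real M powr (1-p) - real (K'+M) powr (1-p))/(p-1)"
      using main[of K'] Suc by simp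
    ultimately show ?thesis by (simp add: diff_divide_distrib)
  qed
qed

lemma pair_prod:
  fixes a :: "nat \<Rightarrow> real"
  shows "(\<Sum>n\<in>{1..<M}. a n * (\<Sum>m\<in>{n<..<M}. a m)) = ((\<Sum>n\<in>{1..<M}. a n)^2 - (\<Sum>n\<in>{1..<M}. (a n)^2))/2"
proof (induction M)
  case 0 then show ?case by simp
next
  case (Suc M)
  show ?case
  proof (cases "M = 0")
    case True then show ?thesis by simp
  next
    case False
    have s1: "{1..<Suc M} = insert M {1..<M}" using False by auto
    have s2: "n \<in> {1..<M} \<Longrightarrow> {n<..<Suc M} = insert M {n<..<M}" for n by auto
    have "(\<Sum>n\<in>{1..<Suc M}. a n * (\<Sum>m\<in>{n<..<Suc M}. a m))
        = (\<Sum>n\<in>{1..<M}. a n * (\<Sum>m\<in>{n<..<Suc M}. a m))"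
    proof -
      have "{M<..<Suc M} = {}" by auto
      then show ?thesis unfolding s1 by simp
    qed
    also have "\<dots> = (\<Sum>n\<in>{1..<M}. a n * (\<Sum>m\<in>{n<..<M}. a m) + a n * a M)"
      by (rule sum.cong) (auto simp: s2 algebra_simps)
    also have "\<dots> = (\<Sum>n\<in>{1..<M}. a n * (\<Sum>m\<in>{n<..<M}. a m)) + (\<Sum>n\<in>{1..<M}. a n) * a M"
      by (simp only: sum.distrib sum_distrib_right)
    also have "\<dots> = ((\<Sum>n\<in>{1..<M}. a n)^2 - (\<Sum>n\<in>{1..<M}. (a n)^2))/2 + (\<Sum>n\<in>{1..<M}. a n) * a M"
      by (simp only: Suc.IH)
    also have "\<dots> = ((\<Sum>n\<in>{1..<Suc M}. a n)^2 - (\<Sum>n\<in>{1..<Suc M}. (a n)^2))/2"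
      unfolding s1 by (simp add: power2_eq_square field_simps)
    finally show ?thesis .
  qed
qed



lemma exp_sq: "exp a \<le> y \<Longrightarrow> b = 2*a \<Longrightarrow> y*y \<le> z \<Longrightarrow> exp b \<le> (z::real)"
proof -
  assume h: "exp a \<le> y" "b = 2*a" "y*y \<le> z"
  have y0: "0 \<le> y" using h(1) exp_gt_zero[of a] by linarith
  have "exp b = exp a * exp a" by (simp only: h(2) mult_2 exp_add)
  also have "\<dots> \<le> y * y" by (rule mult_mono[OF h(1) h(1) y0]) simp
  finally show ?thesis using h(3) by linarith
qed

lemma ln_H0_ge: "2414/100 \<le> ln (3.061 * 10 ^ 10 :: real)"
proof -
  have "exp (1207/6553600::real) \<le> 1 + 1207/6553600 + (1207/6553600)^2" by (rule exp_bound) simp_all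
  also have "\<dots> \<le> 1000184207504/1000000000000" by (simp add: power2_eq_square)
  finally have e0: "exp (1207/6553600::real) \<le> 1000184207504/1000000000000" .
  have e1: "exp (1207/3276800::real) \<le> 1000368448941/1000000000000" by (rule exp_sq[OF e0]) simp_all
  have e2: "exp (1207/1638400::real) \<le> 1000737033637/1000000000000" by (rule exp_sq[OF e1]) simp_all
  have e3: "exp (1207/819200::real) \<le> 1001474610493/1000000000000" by (rule exp_sq[OF e2]) simp_all
  have e4: "exp (1207/409600::real) \<le> 1002951395463/1000000000000" by (rule exp_sq[OF e3]) simp_all
  have e5: "exp (1207/204800::real) \<le> 1005911501662/1000000000000" by (rule exp_sq[OF e4]) simp_all
  have e6: "exp (1207/102400::real) \<le> 1011857949176/1000000000000" by (rule exp_sq[OF e5]) simp_all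
  have e7: "exp (1207/51200::real) \<le> 1023856509311/1000000000000" by (rule exp_sq[OF e6]) simp_all
  have e8: "exp (1207/25600::real) \<le> 1048282151659/1000000000000" by (rule exp_sq[OF e7]) simp_all
  have e9: "exp (1207/12800::real) \<le> 1098895469487/1000000000000" by (rule exp_sq[OF e8]) simp_all
  have e10: "exp (1207/6400::real) \<le> 1207571252860/1000000000000" by (rule exp_sq[OF e9]) simp_all
  have e11: "exp (1207/3200::real) \<le> 1458228330734/1000000000000" by (rule exp_sq[OF e10]) simp_all
  have e12: "exp (1207/1600::real) \<le> 2126429864556/1000000000000" by (rule exp_sq[OF e11]) simp_all
  have e13: "exp (1207/800::real) \<le> 4521703968876/1000000000000" by (rule exp_sq[OF e12]) simp_all
  have e14: "exp (1207/400::real) \<le> 20445806782149/1000000000000" by (rule exp_sq[OF e13]) simp_all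
  have e15: "exp (1207/200::real) \<le> 418031014972971/1000000000000" by (rule exp_sq[OF e14]) simp_all
  have e16: "exp (1207/100::real) \<le> 174749929479332305/1000000000000" by (rule exp_sq[OF e15]) simp_all
  have e17: "exp (1207/50::real) \<le> 30537537853031613762073/1000000000000" by (rule exp_sq[OF e16]) simp_all
  have "exp (2414/100::real) \<le> 3.061 * 10 ^ 10" using e17 by simp
  then have "ln (exp (2414/100::real)) \<le> ln (3.061 * 10 ^ 10)"
    by (subst ln_le_cancel_iff) auto
  then show ?thesis by simp
qed

lemma exp_E0: "19502/10000 \<le> exp (277/10000 * (2414/100) :: real)"
proof -
  define y :: real where "y = 277/10000 * (2414/100) / 8"
  have ey: "exp (277/10000 * (2414/100) :: real) = exp y ^ 8"
    unfolding y_def by (subst exp_of_nat_mult[symmetric]) simp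
  have y0: "0 \<le> y" unfolding y_def by simp
  have t: "1 + y + y^2/2 \<le> exp y" by (rule exp_lower_Taylor_quadratic[OF y0])
  have "(1 + y + y^2/2)^8 \<le> exp y ^ 8" using t y0 by (intro power_mono) auto
  moreover have "19502/10000 \<le> (1 + y + y^2/2)^8" unfolding y_def by (simp add: eval_nat_numeral)
  ultimately show ?thesis using ey by simp
qed

lemma poly_ineq:
  fixes a :: real assumes "277/10000 \<le> a" "a \<le> 4792/10000"
  shows "(1-a)^2 \<le> (1+a)*(1-2*a)*(19502/10000)*(1+(a-277/10000)*(2414/100))/2"
proof -
  define u where "u = a - 277/10000"
  define v where "v = 4792/10000 - a"
  have u: "0 \<le> u" and v: "0 \<le> v" using assms by (auto simp: u_def v_def)
  have eq: "(1+a)*(1-2*a)*(19502/10000)*(1+(a-277/10000)*(2414/100))/2 - (1-a)^2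
     = 613035521/500000000000 + 28228836494707/537500000000 * (u * v) + 36380360941/16796875000 * (u * u)
       + 11769457/250000 * (u * u * v)"
    unfolding u_def v_def power2_eq_square by algebra
  have "0 \<le> u * v" "0 \<le> u * u" "0 \<le> u * u * v" using u v by auto
  then show ?thesis using eq by linarith
qed



lemma key1:
  fixes a x :: real
  assumes a: "277/10000 < a" "a < 4792/10000" and x: "2414/100 \<le> x"
  shows "1 \<le> (x + a*x^2)*((1-2*a)*x - 1)"
proof -
  define s where "s = 1 - 2*a"
  have s: "416/10000 < s" using a by (simp add: s_def)
  have sx: "s*(2414/100) \<le> s*x" using s x by (intro mult_left_mono) auto
  have ax: "0 \<le> a*x^2" using a by simp
  show ?thesis
  proof (cases "1/24 \<le> s*x - 1")
    case True
    have "x*(1/24) \<le> (x + a*x^2)*(s*x - 1)" using True ax x by (intro mult_mono) auto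
    then show ?thesis using x s_def by simp
  next
    case False
    then have "s*(2414/100) < 25/24" using sx by simp
    then have a2: "478/1000 \<le> a" unfolding s_def by simp
    have x2: "(2414/100)^2 \<le> x^2" using x by (intro power_mono) auto
    have "478/1000 * (2414/100)^2 \<le> a*x^2" using a2 x2 by (intro mult_mono) auto
    moreover have "416/10000*(2414/100) \<le> s*x" using s x by (intro mult_mono) auto
    ultimately have "(478/1000 * (2414/100)^2) * (416/10000*(2414/100) - 1) \<le> (a*x^2)*(s*x-1)"
      by (intro mult_mono[of "478/1000 * (2414/100)^2" "a*x^2" "416/10000*(2414/100) - 1" "s*x-1"]) (use ax in auto)
    moreover have "(a*x^2)*(s*x-1) \<le> (x + a*x^2)*(s*x-1)"
      using \<open>416/10000*(2414/100) \<le> s*x\<close> x by (intro mult_right_mono) auto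
    moreover have "1 \<le> (478/1000 * (2414/100)^2) * (416/10000*(2414/100) - (1::real))"
      by (simp add: power2_eq_square)
    ultimately show ?thesis unfolding s_def by linarith
  qed
qed

lemma psi_deriv_nonpos:
  fixes a x :: real
  assumes a: "277/10000 < a" "a < 4792/10000" and x: "2414/100 \<le> x"
  shows "exp(-(1-2*a)*x)*(1 - (1-2*a)*x) + (1-2*a)*(x-1)*exp(-x) \<le> 0"
proof -
  define s where "s = 1 - 2*a"
  have s: "416/10000 < s" using a by (simp add: s_def)
  have sx: "416/10000*(2414/100) \<le> s*x" using s x by (intro mult_mono) auto
  have k: "1 \<le> (x + a*x^2)*(s*x - 1)" using key1[OF a x] by (simp add: s_def)
  have E: "1 + 2*a*x + (2*a*x)^2/2 \<le> exp(2*a*x)"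
    by (rule exp_lower_Taylor_quadratic) (use a x in simp)
  have "(1 + 2*a*x + (2*a*x)^2/2)*(s*x-1) \<le> exp(2*a*x)*(s*x-1)"
    using E sx by (intro mult_right_mono) auto
  moreover have "(1 + 2*a*x + (2*a*x)^2/2)*(s*x-1) = (s*x-1) + 2*a*((x + a*x^2)*(s*x - 1))"
    by (simp add: power2_eq_square algebra_simps)
  moreover have "2*a*1 \<le> 2*a*((x + a*x^2)*(s*x - 1))" using k a by (intro mult_left_mono) auto
  ultimately have main: "s*(x-1) \<le> exp(2*a*x)*(s*x-1)" unfolding s_def by (simp add: algebra_simps)
  have ee: "exp(-s*x) = exp(2*a*x)*exp(-x)" unfolding s_def by (simp add: exp_add[symmetric] algebra_simps)
  have "exp(-s*x)*(1 - s*x) + s*(x-1)*exp(-x) = exp(-x)*(s*(x-1) - exp(2*a*x)*(s*x-1))"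
    unfolding ee by (simp add: algebra_simps)
  also have "\<dots> \<le> 0" using main by (intro mult_nonneg_nonpos) auto
  finally show ?thesis unfolding s_def .
qed

lemma psi_mono:
  fixes a x1 x2 :: real
  assumes a: "277/10000 < a" "a < 4792/10000" and x: "2414/100 \<le> x1" "x1 \<le> x2"
  shows "x2*exp(-(1-2*a)*x2) - (1-2*a)*x2*exp(-x2) \<le> x1*exp(-(1-2*a)*x1) - (1-2*a)*x1*exp(-x1)"
proof (rule DERIV_nonpos_imp_nonincreasing[OF x(2)])
  fix x assume h: "x1 \<le> x" "x \<le> x2"
  show "\<exists>y. ((\<lambda>x. x*exp(-(1-2*a)*x) - (1-2*a)*x*exp(-x)) has_real_derivative y) (at x) \<and> y \<le> 0"
  proof (intro exI conjI)
    show "((\<lambda>x. x*exp(-(1-2*a)*x) - (1-2*a)*x*exp(-x)) has_real_derivative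
       (exp(-(1-2*a)*x)*(1 - (1-2*a)*x) + (1-2*a)*(x-1)*exp(-x))) (at x)"
      by (rule derivative_eq_intros refl | simp add: algebra_simps)+
    show "exp(-(1-2*a)*x)*(1 - (1-2*a)*x) + (1-2*a)*(x-1)*exp(-x) \<le> 0"
      by (rule psi_deriv_nonpos[OF a]) (use x h in simp)
  qed
qed

lemma chi_deriv_nonpos:
  fixes a x :: real
  assumes a: "277/10000 < a" "a < 4792/10000" and x: "2414/100 \<le> x"
  shows "-(1+a)*(1-2*a)*exp(-(1-2*a)*x)/2 + (1-a)^2*exp(-(1-a)*x) \<le> 0"
proof -
  have d0: "0 \<le> (a-277/10000)*(2414/100)" using a by simp
  have "exp(277/10000*(2414/100)) * (1 + (a-277/10000)*(2414/100))
        \<le> exp(277/10000*(2414/100)) * exp((a-277/10000)*(2414/100))"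
    by (intro mult_left_mono exp_ge_add_one_self) auto
  also have "\<dots> = exp(a*(2414/100))"
  proof -
    have "277/10000*(2414/100) + (a-277/10000)*(2414/100) = a*(2414/100::real)" by (simp add: algebra_simps)
    then show ?thesis by (simp only: exp_add[symmetric])
  qed
  also have "\<dots> \<le> exp(a*x)" using a x by simp
  finally have e1: "exp(277/10000*(2414/100)) * (1 + (a-277/10000)*(2414/100)) \<le> exp(a*x)" .
  have "19502/10000 * (1 + (a-277/10000)*(2414/100)) \<le> exp(277/10000*(2414/100)) * (1 + (a-277/10000)*(2414/100))"
    using exp_E0 d0 by (intro mult_right_mono) auto
  with e1 have e2: "19502/10000 * (1 + (a-277/10000)*(2414/100)) \<le> exp(a*x)" by simp
  have c: "0 \<le> (1+a)*(1-2*a)/2" using a by simp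
  have "(1-a)^2 \<le> (1+a)*(1-2*a)*(19502/10000)*(1+(a-277/10000)*(2414/100))/2"
    by (rule poly_ineq) (use a in auto)
  also have "\<dots> = (1+a)*(1-2*a)/2 * (19502/10000 * (1 + (a-277/10000)*(2414/100)))" by simp
  also have "\<dots> \<le> (1+a)*(1-2*a)/2 * exp(a*x)" using e2 c by (intro mult_left_mono) auto
  finally have main: "(1-a)^2 \<le> (1+a)*(1-2*a)/2 * exp(a*x)" .
  have ee: "exp(-(1-2*a)*x) = exp(a*x)*exp(-(1-a)*x)"
  proof -
    have "-(1-2*a)*x = a*x + (-(1-a)*x)" by (simp add: algebra_simps)
    then show ?thesis by (simp only: exp_add)
  qed
  have "-(1+a)*(1-2*a)*exp(-(1-2*a)*x)/2 + (1-a)^2*exp(-(1-a)*x)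
      = exp(-(1-a)*x) * ((1-a)^2 - (1+a)*(1-2*a)/2 * exp(a*x))"
    unfolding ee by (simp add: field_simps power2_eq_square)
  also have "\<dots> \<le> 0" using main by (intro mult_nonneg_nonpos) auto
  finally show ?thesis .
qed

lemma chi_mono:
  fixes a x1 x2 :: real
  assumes a: "277/10000 < a" "a < 4792/10000" and x: "2414/100 \<le> x1" "x1 \<le> x2"
  shows "(1+a)*exp(-(1-2*a)*x2)/2 - (1-a)*exp(-(1-a)*x2) \<le> (1+a)*exp(-(1-2*a)*x1)/2 - (1-a)*exp(-(1-a)*x1)"
proof (rule DERIV_nonpos_imp_nonincreasing[OF x(2)])
  fix x assume h: "x1 \<le> x" "x \<le> x2"
  show "\<exists>y. ((\<lambda>x. (1+a)*exp(-(1-2*a)*x)/2 - (1-a)*exp(-(1-a)*x)) has_real_derivative y) (at x) \<and> y \<le> 0"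
  proof (intro exI conjI)
    show "((\<lambda>x. (1+a)*exp(-(1-2*a)*x)/2 - (1-a)*exp(-(1-a)*x)) has_real_derivative
       (-(1+a)*(1-2*a)*exp(-(1-2*a)*x)/2 + (1-a)^2*exp(-(1-a)*x))) (at x)"
      by (rule derivative_eq_intros refl | simp add: field_simps power2_eq_square)+
    show "-(1+a)*(1-2*a)*exp(-(1-2*a)*x)/2 + (1-a)^2*exp(-(1-a)*x) \<le> 0"
      by (rule chi_deriv_nonpos[OF a]) (use x h in simp)
  qed
qed



lemma pair_integral:
  fixes L K m H T :: real
  assumes L: "0 < L" and K: "0 < K" and mT: "m < T" and HT: "H < T"
  shows "((\<lambda>t. if m < t then cos (t*L)/K else 0) has_integral (sin(T*L) - sin(max H m * L))/(L*K)) {H..T}"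
proof -
  define c where "c = max H m"
  have Hc: "H \<le> c" and cT: "c \<le> T" using mT HT by (auto simp: c_def)
  have i1: "((\<lambda>t. if m < t then cos (t*L)/K else 0) has_integral 0) {H..c}"
  proof (rule has_integral_spike_finite[of "{c}" _ _ "\<lambda>t. 0"])
    show "((\<lambda>t. 0) has_integral 0) {H..c}" by simp
    fix x assume "x \<in> {H..c} - {c}"
    then show "(if m < x then cos (x*L)/K else 0) = 0" by (auto simp: c_def max_def split: if_splits)
  qed simp
  have d: "((\<lambda>t. sin (t*L)/(L*K)) has_vector_derivative cos (x*L)/K) (at x within {c..T})" for x
  proof -
    have "((\<lambda>t. sin (t*L)/(L*K)) has_real_derivative (cos (x*L)*L/(L*K))) (at x within {c..T})"
      using L K by (auto intro!: derivative_eq_intros simp: field_simps)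
    then show ?thesis using L K by (simp add: has_real_derivative_iff_has_vector_derivative[symmetric])
  qed
  have i2': "((\<lambda>t. cos (t*L)/K) has_integral (sin(T*L)/(L*K) - sin(c*L)/(L*K))) {c..T}"
    by (rule fundamental_theorem_of_calculus[OF cT]) (rule d)
  have i2: "((\<lambda>t. if m < t then cos (t*L)/K else 0) has_integral (sin(T*L)/(L*K) - sin(c*L)/(L*K))) {c..T}"
  proof (rule has_integral_spike_finite[of "{c}" _ _ "\<lambda>t. cos (t*L)/K"])
    fix x assume "x \<in> {c..T} - {c}"
    then show "(if m < x then cos (x*L)/K else 0) = cos (x*L)/K" by (auto simp: c_def max_def split: if_splits)
  qed (use i2' in simp_all)
  have "((\<lambda>t. if m < t then cos (t*L)/K else 0) has_integral (0 + (sin(T*L)/(L*K) - sin(c*L)/(L*K)))) {H..T}"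
    by (rule has_integral_combine[OF Hc cT i1 i2])
  then show ?thesis by (simp add: c_def diff_divide_distrib)
qed

lemma pair_integral_le:
  fixes L K m H T :: real
  assumes L: "0 < L" and K: "0 < K" and mT: "m < T" and HT: "H < T"
  shows "(\<lambda>t. if m < t then cos (t*L)/K else 0) integrable_on {H..T}"
    and "integral {H..T} (\<lambda>t. if m < t then cos (t*L)/K else 0) \<le> 2/(L*K)"
proof -
  note h = pair_integral[OF assms]
  show "(\<lambda>t. if m < t then cos (t*L)/K else 0) integrable_on {H..T}" using h by blast
  have "sin(T*L) - sin(max H m * L) \<le> 2"
    using sin_le_one[of "T*L"] sin_ge_minus_one[of "max H m * L"] by linarith
  then have "(sin(T*L) - sin(max H m * L))/(L*K) \<le> 2/(L*K)" using L K by (intro divide_right_mono) auto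
  then show "integral {H..T} (\<lambda>t. if m < t then cos (t*L)/K else 0) \<le> 2/(L*K)"
    using integral_unique[OF h] by simp
qed

lemma pair_bound:
  fixes \<sigma> :: real
  assumes n: "1 \<le> n" and nm: "n < m" and sig: "0 < \<sigma>"
  shows "2/(ln (real m/real n) * (real n * real m) powr \<sigma>)
     \<le> 2*(real n powr (1-2*\<sigma>)/(real m - real n) + real n powr (-\<sigma>) * real m powr (-\<sigma>))"
proof -
  have n0: "0 < real n" using n by simp
  have m0: "0 < real m" using n nm by simp
  have mn: "0 < real m - real n" using nm by simp
  have "ln (real n/real m) \<le> real n/real m - 1" by (rule ln_le_minus_one) (use n0 m0 in simp)
  then have Lb: "(real m - real n)/real m \<le> ln (real m/real n)"
    using n0 m0 by (simp add: ln_div field_simps)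
  have Lp: "0 < (real m - real n)/real m" using mn m0 by simp
  define K where "K = real n powr \<sigma> * real m powr \<sigma>"
  have K0: "0 < K" using n0 m0 by (simp add: K_def)
  have Keq: "(real n * real m) powr \<sigma> = K" using n0 m0 by (simp add: K_def powr_mult)
  have "2/(ln (real m/real n) * K) \<le> 2/((real m - real n)/real m * K)"
    using Lb Lp K0 by (intro divide_left_mono mult_right_mono mult_pos_pos) auto
  also have "\<dots> = 2*(real n/((real m - real n)*K) + 1/K)"
    using mn m0 K0 by (simp add: field_simps)
  also have "\<dots> \<le> 2*(real n powr (1-2*\<sigma>)/(real m - real n) + real n powr (-\<sigma>) * real m powr (-\<sigma>))"
  proof -
    have "real m powr \<sigma> \<ge> real n powr \<sigma>" using n0 nm sig by (intro powr_mono2) auto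
    then have "real n powr \<sigma> * real n powr \<sigma> \<le> K" unfolding K_def using n0
      by (intro mult_left_mono) auto
    then have "real n / K \<le> real n / (real n powr \<sigma> * real n powr \<sigma>)"
      using n0 K0 by (intro divide_left_mono) auto
    also have "\<dots> = real n powr (1-2*\<sigma>)"
    proof -
      have "real n powr \<sigma> * real n powr \<sigma> = real n powr (2*\<sigma>)"
        by (simp only: powr_add[symmetric] mult_2)
      moreover have "real n powr (1-2*\<sigma>) = real n powr 1 / real n powr (2*\<sigma>)" by (rule powr_diff)
      ultimately show ?thesis using n0 by simp
    qed
    finally have a1: "real n / K \<le> real n powr (1-2*\<sigma>)" .
    have a2: "1/K = real n powr (-\<sigma>) * real m powr (-\<sigma>)"
      unfolding K_def by (simp add: powr_minus divide_inverse)
    have "real n/((real m - real n)*K) = (real n / K)/(real m - real n)" by simp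
    also have "\<dots> \<le> real n powr (1-2*\<sigma>)/(real m - real n)" using a1 mn by (intro divide_right_mono) auto
    finally show ?thesis using a2 by simp
  qed
  finally show ?thesis unfolding Keq .
qed

lemma pairs_eq:
  assumes "0 < T"
  shows "{(n::nat, m::nat). 1 \<le> n \<and> n < m \<and> real m < T} = Sigma {1..<nat \<lceil>T\<rceil>} (\<lambda>n. {n<..<nat \<lceil>T\<rceil>})"
proof -
  have e: "real m < T \<longleftrightarrow> m < nat \<lceil>T\<rceil>" for m :: nat
    by (simp only: zless_nat_eq_int_zless less_ceiling_iff of_int_of_nat_eq)
  show ?thesis
  proof (intro set_eqI iffI)
    fix p assume "p \<in> {(n::nat, m::nat). 1 \<le> n \<and> n < m \<and> real m < T}"
    then show "p \<in> Sigma {1..<nat \<lceil>T\<rceil>} (\<lambda>n. {n<..<nat \<lceil>T\<rceil>})" using e[of "snd p"] by (cases p) auto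
  next
    fix p assume "p \<in> Sigma {1..<nat \<lceil>T\<rceil>} (\<lambda>n. {n<..<nat \<lceil>T\<rceil>})"
    then show "p \<in> {(n::nat, m::nat). 1 \<le> n \<and> n < m \<and> real m < T}" using e[of "snd p"] by (cases p) auto
  qed
qed

lemma inner_harm:
  assumes "n < M"
  shows "(\<Sum>m\<in>{n<..<M}. 1/(real m - real n)) = (\<Sum>k\<in>{1..M-n-1}. 1/real k)"
  by (rule sum.reindex_bij_witness[of _ "\<lambda>k. k+n" "\<lambda>m. m-n"]) (use assms in \<open>auto simp: of_nat_diff\<close>)



lemma zeta_bound:
  fixes p :: real assumes p: "1 < p" and M: "1 \<le> M"
  shows "zeta_real p \<le> (\<Sum>n\<in>{1..<M}. real n powr (-p)) + real M powr (-p) + real M powr (1-p)/(p-1)"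
proof -
  define f where "f n = real (Suc n) powr (-p)" for n
  have z: "zeta_real p = suminf f"
    unfolding zeta_real_def f_def by (simp add: powr_minus_divide)
  have "summable (\<lambda>n. real n powr (-p))" using p by (subst summable_real_powr_iff) simp
  then have sf: "summable f" unfolding f_def using summable_Suc_iff[of "\<lambda>k. real k powr (-p)"] by blast
  have split: "suminf f = (\<Sum>j. f (j + (M-1))) + (\<Sum>i<M-1. f i)"
    by (rule suminf_split_initial_segment[OF sf])
  have init: "(\<Sum>i<M-1. f i) = (\<Sum>n\<in>{1..<M}. real n powr (-p))"
    unfolding f_def
    by (rule sum.reindex_bij_witness[of _ "\<lambda>n. n - 1" "Suc"]) (use M in auto)
  have fe: "f (j + (M-1)) = real (j+M) powr (-p)" for j
    unfolding f_def using M by (simp add: Suc_diff_le add.commute)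
  have "(\<Sum>j. f (j + (M-1))) \<le> real M powr (-p) + real M powr (1-p)/(p-1)"
  proof (rule suminf_le_const)
    show "summable (\<lambda>j. f (j + (M-1)))" by (rule summable_ignore_initial_segment[OF sf])
    fix K show "(\<Sum>j<K. f (j + (M-1))) \<le> real M powr (-p) + real M powr (1-p)/(p-1)"
      unfolding fe by (rule tail_bound[OF p M])
  qed
  then show ?thesis using z split init by simp
qed



lemma integral_bound:
  fixes \<sigma> H T :: real
  assumes sig: "1/2 < \<sigma>" "\<sigma> < 1" and HT: "H < T" and T2: "2 \<le> T"
  defines "U \<equiv> (1 + ln T) * ((T powr (2-2*\<sigma>) - (2*\<sigma>-1))/(2-2*\<sigma>))
      + (((T powr (1-\<sigma>) - \<sigma>)/(1-\<sigma>))^2 - (zeta_real (2*\<sigma>) - T powr (-2*\<sigma>) - T powr (1-2*\<sigma>)/(2*\<sigma>-1)))/2"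
  shows "integral {H..T} (\<lambda>t. Ssum \<sigma> t) \<le> 2 * U" and "0 \<le> U"
proof -
  define M where "M = nat \<lceil>T\<rceil>"
  define P where "P = Sigma {1..<M} (\<lambda>n. {n<..<M})"
  have T0: "0 < T" using T2 by simp
  have M2: "2 \<le> M" unfolding M_def using T2 by linarith
  have MT: "T \<le> real M" unfolding M_def using T0 by linarith
  have M1T: "real (M-1) \<le> T" unfolding M_def using T0 M2 by (simp add: of_nat_diff) linarith
  have finP: "finite P" unfolding P_def by auto
  have Peq: "{(n::nat, m::nat). 1 \<le> n \<and> n < m \<and> real m < T} = P"
    unfolding P_def M_def by (rule pairs_eq[OF T0])
  define g where "g p t = (if real (snd p) < t then cos (t * ln (real (snd p) / real (fst p))) /
      (real (fst p) * real (snd p)) powr \<sigma> else 0)" for p :: "nat \<times> nat" and t :: real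
  have Ss: "Ssum \<sigma> t = (\<Sum>p\<in>P. g p t)" if t: "t \<in> {H..T}" for t
  proof -
    have "{(n::nat, m::nat). 1 \<le> n \<and> n < m \<and> real m < t} = {p \<in> P. real (snd p) < t}"
      unfolding Peq[symmetric] using t by auto
    then have "Ssum \<sigma> t = (\<Sum>p\<in>{p \<in> P. real (snd p) < t}. (\<lambda>(n,m). cos (t * ln (real m / real n)) / (real n * real m) powr \<sigma>) p)"
      unfolding Ssum_def by simp
    also have "\<dots> = (\<Sum>p\<in>P. g p t)"
      by (subst sum.inter_filter[OF finP]) (auto simp: g_def split_def intro!: sum.cong)
    finally show ?thesis .
  qed
  have pos: "1 \<le> fst p" "fst p < snd p" "snd p < M" if "p \<in> P" for p using that unfolding P_def by auto
  have gint: "g p integrable_on {H..T}" and gle: "integral {H..T} (g p) \<le> 2/(ln (real (snd p)/real (fst p)) * (real (fst p) * real (snd p)) powr \<sigma>)"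
    if p: "p \<in> P" for p
  proof -
    have L: "0 < ln (real (snd p)/real (fst p))" using pos[OF p] by simp
    have K: "0 < (real (fst p) * real (snd p)) powr \<sigma>" using pos[OF p] by simp
    have mT: "real (snd p) < T" using p Peq by auto
    have e: "g p = (\<lambda>t. if real (snd p) < t then cos (t * ln (real (snd p)/real (fst p))) / (real (fst p) * real (snd p)) powr \<sigma> else 0)"
      by (simp add: g_def fun_eq_iff)
    show "g p integrable_on {H..T}" unfolding e by (rule pair_integral_le(1)[OF L K mT HT])
    show "integral {H..T} (g p) \<le> 2/(ln (real (snd p)/real (fst p)) * (real (fst p) * real (snd p)) powr \<sigma>)"
      unfolding e by (rule pair_integral_le(2)[OF L K mT HT])
  qed
  define F1 where "F1 n m = real n powr (1-2*\<sigma>)/(real m - real n)" for n m :: nat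
  define a where "a n = real n powr (-\<sigma>)" for n :: nat
  have "integral {H..T} (\<lambda>t. Ssum \<sigma> t) = integral {H..T} (\<lambda>t. \<Sum>p\<in>P. g p t)"
    by (rule integral_cong) (rule Ss)
  also have "\<dots> = (\<Sum>p\<in>P. integral {H..T} (g p))"
    by (rule integral_sum[OF finP gint])
  also have "\<dots> \<le> (\<Sum>p\<in>P. 2*(F1 (fst p) (snd p) + a (fst p) * a (snd p)))"
  proof (rule sum_mono)
    fix p assume p: "p \<in> P"
    have "0 < \<sigma>" using sig by simp
    then show "integral {H..T} (g p) \<le> 2*(F1 (fst p) (snd p) + a (fst p) * a (snd p))"
      using gle[OF p] pair_bound[OF pos(1,2)[OF p]] unfolding F1_def a_def by (meson order_trans)
  qed
  also have "\<dots> = (\<Sum>n\<in>{1..<M}. \<Sum>m\<in>{n<..<M}. 2*(F1 n m + a n * a m))"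
    unfolding P_def by (subst sum.Sigma) (auto simp: split_def)
  also have "\<dots> = 2 * (\<Sum>n\<in>{1..<M}. \<Sum>m\<in>{n<..<M}. F1 n m + a n * a m)"
    by (simp add: sum_distrib_left)
  also have "\<dots> = 2 * ((\<Sum>n\<in>{1..<M}. real n powr (1-2*\<sigma>) * (\<Sum>m\<in>{n<..<M}. 1/(real m - real n)))
                    + (\<Sum>n\<in>{1..<M}. a n * (\<Sum>m\<in>{n<..<M}. a m)))"
    by (simp add: sum.distrib sum_distrib_left F1_def)
  finally have I1: "integral {H..T} (\<lambda>t. Ssum \<sigma> t) \<le> 2 * ((\<Sum>n\<in>{1..<M}. real n powr (1-2*\<sigma>) * (\<Sum>m\<in>{n<..<M}. 1/(real m - real n)))
                    + (\<Sum>n\<in>{1..<M}. a n * (\<Sum>m\<in>{n<..<M}. a m)))" .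
  have hb: "(\<Sum>m\<in>{n<..<M}. 1/(real m - real n)) \<le> 1 + ln T" if n: "n \<in> {1..<M}" for n
  proof -
    have e: "(\<Sum>m\<in>{n<..<M}. 1/(real m - real n)) = (\<Sum>k\<in>{1..M-n-1}. 1/real k)"
      by (rule inner_harm) (use n in auto)
    show ?thesis
    proof (cases "M-n-1 = 0")
      case True
      then show ?thesis unfolding e using T2 by simp
    next
      case False
      have "(\<Sum>k\<in>{1..M-n-1}. 1/real k) \<le> 1 + ln (real (M-n-1))" by (rule harm_bound) (use False in auto)
      also have "\<dots> \<le> 1 + ln T"
      proof -
        have "real (M-n-1) \<le> real (M-1)" by simp
        then have "real (M-n-1) \<le> T" using M1T by linarith
        then show ?thesis using False by simp
      qed
      finally show ?thesis unfolding e .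
    qed
  qed
  have P0: "0 \<le> (\<Sum>n\<in>{1..<M}. real n powr (1-2*\<sigma>))" by (simp add: sum_nonneg)
  have h1: "(\<Sum>n\<in>{1..<M}. real n powr (1-2*\<sigma>) * (\<Sum>m\<in>{n<..<M}. 1/(real m - real n)))
      \<le> (\<Sum>n\<in>{1..<M}. real n powr (1-2*\<sigma>) * (1 + ln T))"
    by (rule sum_mono) (use hb in \<open>auto intro!: mult_left_mono\<close>)
  have iv: "{1..<M} = {1..M-1}" using M2 by auto
  have Pb: "(\<Sum>n\<in>{1..<M}. real n powr (1-2*\<sigma>)) \<le> (T powr (2-2*\<sigma>) - (2*\<sigma>-1))/(2-2*\<sigma>)"
  proof -
    have "(\<Sum>n\<in>{1..M-1}. real n powr (-(2*\<sigma>-1))) \<le> (real (M-1) powr (1-(2*\<sigma>-1)) - (2*\<sigma>-1))/(1-(2*\<sigma>-1))"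
      by (rule sum_pow_bound) (use sig M2 in auto)
    also have "\<dots> \<le> (T powr (2-2*\<sigma>) - (2*\<sigma>-1))/(2-2*\<sigma>)"
    proof -
      have "real (M-1) powr (2-2*\<sigma>) \<le> T powr (2-2*\<sigma>)" using M1T sig by (intro powr_mono2) auto
      moreover have e: "1-(2*\<sigma>-1) = 2-2*\<sigma>" by simp
      ultimately show ?thesis unfolding e using sig by (intro divide_right_mono) auto
    qed
    finally show ?thesis unfolding iv by simp
  qed
  have A0: "0 \<le> (\<Sum>n\<in>{1..<M}. a n)" unfolding a_def by (simp add: sum_nonneg)
  have Ab: "(\<Sum>n\<in>{1..<M}. a n) \<le> (T powr (1-\<sigma>) - \<sigma>)/(1-\<sigma>)"
  proof -
    have "(\<Sum>n\<in>{1..M-1}. real n powr (-\<sigma>)) \<le> (real (M-1) powr (1-\<sigma>) - \<sigma>)/(1-\<sigma>)"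
      by (rule sum_pow_bound) (use sig M2 in auto)
    also have "\<dots> \<le> (T powr (1-\<sigma>) - \<sigma>)/(1-\<sigma>)"
    proof -
      have "real (M-1) powr (1-\<sigma>) \<le> T powr (1-\<sigma>)" using M1T sig by (intro powr_mono2) auto
      then show ?thesis using sig by (intro divide_right_mono) auto
    qed
    finally show ?thesis unfolding iv a_def by simp
  qed
  have Bb: "zeta_real (2*\<sigma>) - T powr (-2*\<sigma>) - T powr (1-2*\<sigma>)/(2*\<sigma>-1) \<le> (\<Sum>n\<in>{1..<M}. (a n)^2)"
  proof -
    have sq: "(a n)^2 = real n powr (-(2*\<sigma>))" for n
      unfolding a_def power2_eq_square by (simp add: powr_add[symmetric])
    have z: "zeta_real (2*\<sigma>) \<le> (\<Sum>n\<in>{1..<M}. real n powr (-(2*\<sigma>))) + real M powr (-(2*\<sigma>)) + real M powr (1-2*\<sigma>)/(2*\<sigma>-1)"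
      by (rule zeta_bound) (use sig M2 in auto)
    have m1: "real M powr (-(2*\<sigma>)) \<le> T powr (-(2*\<sigma>))" using MT T0 sig by (intro powr_mono2') auto
    have m2: "real M powr (1-2*\<sigma>) \<le> T powr (1-2*\<sigma>)" using MT T0 sig by (intro powr_mono2') auto
    have m2': "real M powr (1-2*\<sigma>)/(2*\<sigma>-1) \<le> T powr (1-2*\<sigma>)/(2*\<sigma>-1)" using m2 sig by (intro divide_right_mono) auto
    show ?thesis using z m1 m2' unfolding sq by simp
  qed
  have pp: "(\<Sum>n\<in>{1..<M}. a n * (\<Sum>m\<in>{n<..<M}. a m)) = ((\<Sum>n\<in>{1..<M}. a n)^2 - (\<Sum>n\<in>{1..<M}. (a n)^2))/2"
    by (rule pair_prod)
  have pp0: "0 \<le> (\<Sum>n\<in>{1..<M}. a n * (\<Sum>m\<in>{n<..<M}. a m))"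
    unfolding a_def by (intro sum_nonneg mult_nonneg_nonneg) auto
  have Asq: "(\<Sum>n\<in>{1..<M}. a n)^2 \<le> ((T powr (1-\<sigma>) - \<sigma>)/(1-\<sigma>))^2"
    using A0 Ab by (intro power_mono) auto
  have LT: "0 \<le> 1 + ln T" using T2 by simp
  have S'le: "(\<Sum>n\<in>{1..<M}. real n powr (1-2*\<sigma>)) * (1 + ln T) + (\<Sum>n\<in>{1..<M}. a n * (\<Sum>m\<in>{n<..<M}. a m)) \<le> U"
  proof -
    have "(\<Sum>n\<in>{1..<M}. real n powr (1-2*\<sigma>)) * (1 + ln T) \<le> (1 + ln T) * ((T powr (2-2*\<sigma>) - (2*\<sigma>-1))/(2-2*\<sigma>))"
      using mult_left_mono[OF Pb LT] by (simp add: mult.commute)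
    moreover have "((\<Sum>n\<in>{1..<M}. a n)^2 - (\<Sum>n\<in>{1..<M}. (a n)^2))/2 \<le>
       (((T powr (1-\<sigma>) - \<sigma>)/(1-\<sigma>))^2 - (zeta_real (2*\<sigma>) - T powr (-2*\<sigma>) - T powr (1-2*\<sigma>)/(2*\<sigma>-1)))/2"
      using Asq Bb by (intro divide_right_mono) auto
    ultimately show ?thesis unfolding U_def pp by (rule add_mono)
  qed
  have S'0: "0 \<le> (\<Sum>n\<in>{1..<M}. real n powr (1-2*\<sigma>)) * (1 + ln T) + (\<Sum>n\<in>{1..<M}. a n * (\<Sum>m\<in>{n<..<M}. a m))"
    using P0 LT pp0 by simp
  show "0 \<le> U" using S'0 S'le by linarith
  have h1': "(\<Sum>n\<in>{1..<M}. real n powr (1-2*\<sigma>) * (\<Sum>m\<in>{n<..<M}. 1/(real m - real n)))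
      \<le> (\<Sum>n\<in>{1..<M}. real n powr (1-2*\<sigma>)) * (1 + ln T)"
    using h1 by (simp only: sum_distrib_right[symmetric])
  have XY: "(\<Sum>n\<in>{1..<M}. real n powr (1-2*\<sigma>) * (\<Sum>m\<in>{n<..<M}. 1/(real m - real n)))
                    + (\<Sum>n\<in>{1..<M}. a n * (\<Sum>m\<in>{n<..<M}. a m)) \<le> U"
    by (rule order_trans[OF add_right_mono[OF h1'] S'le])
  show "integral {H..T} (\<lambda>t. Ssum \<sigma> t) \<le> 2 * U"
    by (rule order_trans[OF I1]) (use XY in simp)
qed

lemma UT_identity:
  fixes a b T Y L z :: real
  assumes a: "a \<noteq> 0" and b: "b \<noteq> 0" and T: "T \<noteq> 0" and bd: "b = 1 - 2*a"
  shows "((1 + L) * ((Y^2 - b)/(2*a)) + (((Y - (1-a))/a)^2 - (z - Y^2/T^2 - (Y^2/T)/b))/2)/T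
   = L * (Y^2/T)/(2*a) - b*L/(2*a*T) + ((1-3*(1-a)+3*(1-a)^2)/(2*a^2) - z/2)/T
     + (2-(1-a))*(Y^2/T)/(2*a^2) - (1-a)*(Y/T)/a^2 + (Y^2/T^2)/(2*b) + (Y^2/T^3)/2"
  using a b T
  apply (simp add: field_simps power2_eq_square power3_eq_cube)
  unfolding bd by algebra

lemma UT2:
  fixes w T Y L z :: real
  assumes "w \<noteq> 1" "2*w-1 \<noteq> 0" "T \<noteq> 0"
  shows "((1 + L) * ((Y^2 - (2*w-1))/(2-2*w)) + (((Y - w)/(1-w))^2 - (z - Y^2/T^2 - (Y^2/T)/(2*w-1)))/2)/T
   = L * (Y^2/T)/(2*(1-w)) - (2*w-1)*L/(2*(1-w)*T) + ((1-3*w+3*w^2)/(2*(1-w)^2) - z/2)/T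
     + (2-w)*(Y^2/T)/(2*(1-w)^2) - w*(Y/T)/(1-w)^2 + (Y^2/T^2)/(2*(2*w-1)) + (Y^2/T^3)/2"
proof -
  have h: "1 - w \<noteq> 0" "2*w-1 = 1 - 2*(1-w)" using assms by auto
  have e1: "2 - 2*w = 2*(1-w)" "1 - (1-w) = w" "2 - w = 2 - (1-(1-w))" by simp_all
  show ?thesis
    using UT_identity[OF h(1) assms(2) assms(3) h(2), of L Y z] unfolding e1(1) by (simp add: e1(2))
qed

lemma G_ident:
  fixes l P x b c d w Q m R S :: real
  assumes "c \<noteq> 0" "x \<noteq> 0"
  shows "(l*P - b*l*(1/x))/(2*c) + (d*P/2 - w*Q)/c^2 + m*(1/x) + R/(2*b) + S/2
     = l*P/(2*c) - b*l/(2*c*x) + m/x + d*P/(2*c^2) - w*Q/c^2 + R/(2*b) + S/2"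
  using assms by (simp add: field_simps power2_eq_square)

theorem mainTheorem8:
  fixes \<sigma>0 H T :: real
  assumes "0.5208 < \<sigma>0" and "\<sigma>0 < 0.9723"
    and "10 ^ 3 \<le> H" and "H < H0" and "H0 \<le> T"
  shows "2 / (T - H) * integral {H..T} (\<lambda>t. Ssum \<sigma>0 t) \<le> eps1 \<sigma>0 H"
proof -
  note as = assms
  have H0pos: "0 < H0" and H02: "2 \<le> H0" by (simp_all add: H0_def)
  have T0: "0 < T" and T2: "2 \<le> T" using as H02 by auto
  have Hpos: "0 < H" using as by simp
  have HT: "H < T" using as by simp
  have sig: "1/2 < \<sigma>0" "\<sigma>0 < 1" using as by auto
  define a where "a = 1 - \<sigma>0"
  have a: "277/10000 < a" "a < 4792/10000" using as by (auto simp: a_def)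
  have L0: "2414/100 \<le> ln H0" using ln_H0_ge by (simp add: H0_def)
  have LT: "ln H0 \<le> ln T" using as H0pos by simp
  define U where "U = (1 + ln T) * ((T powr (2-2*\<sigma>0) - (2*\<sigma>0-1))/(2-2*\<sigma>0))
      + (((T powr (1-\<sigma>0) - \<sigma>0)/(1-\<sigma>0))^2 - (zeta_real (2*\<sigma>0) - T powr (-2*\<sigma>0) - T powr (1-2*\<sigma>0)/(2*\<sigma>0-1)))/2"
  have IU: "integral {H..T} (\<lambda>t. Ssum \<sigma>0 t) \<le> 2*U" and U0: "0 \<le> U"
    using integral_bound[OF sig HT T2] unfolding U_def by auto
  define C where "C = (1 - 3*\<sigma>0 + 3*\<sigma>0^2) / (2 * (1 - \<sigma>0)^2) - zeta_real (2*\<sigma>0) / 2"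
  define mC where "mC = max 0 C"
  define Gf where "Gf x = (ln x) * x powr (1 - 2*\<sigma>0) / (2 * (1 - \<sigma>0))
     - (2*\<sigma>0 - 1) * ln x / (2 * (1 - \<sigma>0) * x)
     + mC / x
     + (2 - \<sigma>0) * x powr (1 - 2*\<sigma>0) / (2 * (1 - \<sigma>0)^2)
     - \<sigma>0 * x powr (-\<sigma>0) / (1 - \<sigma>0)^2
     + x powr (-2*\<sigma>0) / (2 * (2*\<sigma>0 - 1))
     + x powr (-2*\<sigma>0 - 1) / 2" for x
  have eps: "eps1 \<sigma>0 H = 4 * H0 / (H0 - H) * Gf H0"
    unfolding eps1_def Gf_def mC_def C_def by simp
  have UT: "U / T \<le> Gf T"
  proof -
    define Y where "Y = T powr (1-\<sigma>0)"
    have p1: "T powr (2-2*\<sigma>0) = Y^2" unfolding Y_def power2_eq_square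
      by (simp add: powr_add[symmetric])
    have p2: "T powr (1-2*\<sigma>0) = Y^2/T"
    proof -
      have "T powr (1-2*\<sigma>0) = T powr ((2-2*\<sigma>0) - 1)" by (rule arg_cong[where f="\<lambda>r. T powr r"]) linarith
      also have "\<dots> = T powr (2-2*\<sigma>0) / T powr 1" by (rule powr_diff)
      finally show ?thesis using T0 p1 by simp
    qed
    have p3: "T powr (-\<sigma>0) = Y/T"
    proof -
      have "T powr (-\<sigma>0) = T powr ((1-\<sigma>0) - 1)" by (rule arg_cong[where f="\<lambda>r. T powr r"]) linarith
      also have "\<dots> = T powr (1-\<sigma>0) / T powr 1" by (rule powr_diff)
      finally show ?thesis using T0 unfolding Y_def by simp
    qed
    have p4: "T powr (-2*\<sigma>0) = Y^2/T^2"
    proof -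
      have "T powr (-2*\<sigma>0) = T powr ((2-2*\<sigma>0) - 2)" by (rule arg_cong[where f="\<lambda>r. T powr r"]) linarith
      also have "\<dots> = T powr (2-2*\<sigma>0) / T powr 2" by (rule powr_diff)
      finally show ?thesis using T0 p1 by (simp add: powr_numeral)
    qed
    have p5: "T powr (-2*\<sigma>0 - 1) = Y^2/T^3"
    proof -
      have "T powr (-2*\<sigma>0 - 1) = T powr ((2-2*\<sigma>0) - 3)" by (rule arg_cong[where f="\<lambda>r. T powr r"]) linarith
      also have "\<dots> = T powr (2-2*\<sigma>0) / T powr 3" by (rule powr_diff)
      finally show ?thesis using T0 p1 by (simp add: powr_numeral)
    qed
    have id: "U/T = ln T * (Y^2/T)/(2*(1-\<sigma>0)) - (2*\<sigma>0-1)*ln T/(2*(1-\<sigma>0)*T) + C/T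
     + (2-\<sigma>0)*(Y^2/T)/(2*(1-\<sigma>0)^2) - \<sigma>0*(Y/T)/(1-\<sigma>0)^2 + (Y^2/T^2)/(2*(2*\<sigma>0-1)) + (Y^2/T^3)/2"
      unfolding U_def p1 p4 p2 C_def Y_def[symmetric] by (rule UT2) (use sig T0 in auto)
    have CC: "C/T \<le> mC/T" unfolding mC_def using T0 by (intro divide_right_mono) auto
    have "Gf T = ln T * (Y^2/T)/(2*(1-\<sigma>0)) - (2*\<sigma>0-1)*ln T/(2*(1-\<sigma>0)*T) + mC/T
     + (2-\<sigma>0)*(Y^2/T)/(2*(1-\<sigma>0)^2) - \<sigma>0*(Y/T)/(1-\<sigma>0)^2 + (Y^2/T^2)/(2*(2*\<sigma>0-1)) + (Y^2/T^3)/2"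
      unfolding Gf_def p2 p3 p4 p5 by simp
    then show ?thesis using id CC by linarith
  qed
  define psi where "psi y = y*exp(-(2*\<sigma>0-1)*y) - (2*\<sigma>0-1)*y*exp(-y)" for y
  define chi where "chi y = (2-\<sigma>0)*exp(-(2*\<sigma>0-1)*y)/2 - \<sigma>0*exp(-\<sigma>0*y)" for y
  define Psi where "Psi y = psi y/(2*(1-\<sigma>0)) + chi y/(1-\<sigma>0)^2 + mC*exp(-y)
       + exp((-2*\<sigma>0)*y)/(2*(2*\<sigma>0-1)) + exp((-2*\<sigma>0-1)*y)/2" for y
  have Gexp: "Gf x = Psi (ln x)" if x: "0 < x" for x
  proof -
    have e1: "exp(-(2*\<sigma>0-1)*ln x) = x powr (1-2*\<sigma>0)" using x by (simp add: powr_def)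
    have e2: "exp(-\<sigma>0*ln x) = x powr (-\<sigma>0)" using x by (simp add: powr_def)
    have e3: "exp(-ln x) = 1/x" using x by (simp add: exp_minus inverse_eq_divide)
    have e4: "exp((-2*\<sigma>0)*ln x) = x powr (-2*\<sigma>0)" using x by (simp add: powr_def)
    have e5: "exp((-2*\<sigma>0-1)*ln x) = x powr (-2*\<sigma>0-1)" using x by (simp add: powr_def)
    show ?thesis unfolding Psi_def psi_def chi_def e1 e2 e3 e4 e5 Gf_def
      by (rule G_ident[symmetric]) (use sig x in auto)
  qed
  have aeq: "1 - 2*a = 2*\<sigma>0 - 1" "1 + a = 2 - \<sigma>0" "1 - a = \<sigma>0" by (simp_all add: a_def)
  have GT: "Gf T \<le> Gf H0"
  proof -
    have m1: "psi (ln T) \<le> psi (ln H0)"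
      using psi_mono[OF a L0 LT] unfolding psi_def aeq .
    have m2: "chi (ln T) \<le> chi (ln H0)"
      using chi_mono[OF a L0 LT] unfolding chi_def aeq .
    have d1: "psi (ln T)/(2*(1-\<sigma>0)) \<le> psi (ln H0)/(2*(1-\<sigma>0))"
      using m1 sig by (intro divide_right_mono) auto
    have d2: "chi (ln T)/(1-\<sigma>0)^2 \<le> chi (ln H0)/(1-\<sigma>0)^2"
      using m2 by (intro divide_right_mono) auto
    have d3: "mC*exp(-ln T) \<le> mC*exp(-ln H0)"
      unfolding mC_def using LT by (intro mult_left_mono) auto
    have "(-2*\<sigma>0)*ln T \<le> (-2*\<sigma>0)*ln H0" using LT sig by (intro mult_left_mono_neg) auto
    then have d4: "exp((-2*\<sigma>0)*ln T)/(2*(2*\<sigma>0-1)) \<le> exp((-2*\<sigma>0)*ln H0)/(2*(2*\<sigma>0-1))"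
      using sig by (intro divide_right_mono) auto
    have "(-2*\<sigma>0-1)*ln T \<le> (-2*\<sigma>0-1)*ln H0" using LT sig by (intro mult_left_mono_neg) auto
    then have d5: "exp((-2*\<sigma>0-1)*ln T)/2 \<le> exp((-2*\<sigma>0-1)*ln H0)/2" by simp
    have "Psi (ln T) \<le> Psi (ln H0)" unfolding Psi_def using d1 d2 d3 d4 d5 by linarith
    then show ?thesis using Gexp[OF T0] Gexp[OF H0pos] by simp
  qed
  have c4: "0 \<le> 4 * H0 / (H0 - H)" using as H0pos by simp
  have k: "1/(T-H) \<le> H0/((H0-H)*T)"
  proof -
    have "H*H0 \<le> H*T" using as Hpos by (intro mult_left_mono) auto
    then have "(H0-H)*T \<le> H0*(T-H)" by (simp add: algebra_simps)
    then show ?thesis using HT as T0 by (simp add: field_simps)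
  qed
  have "2 / (T - H) * integral {H..T} (\<lambda>t. Ssum \<sigma>0 t) \<le> 2/(T-H) * (2*U)"
    using IU HT by (intro mult_left_mono) auto
  also have "\<dots> = (4*U) * (1/(T-H))" by simp
  also have "\<dots> \<le> (4*U) * (H0/((H0-H)*T))" using k U0 by (intro mult_left_mono) auto
  also have "\<dots> = 4 * H0 / (H0 - H) * (U/T)" by simp
  also have "\<dots> \<le> 4 * H0 / (H0 - H) * Gf T" using UT c4 by (intro mult_left_mono) auto
  also have "\<dots> \<le> 4 * H0 / (H0 - H) * Gf H0" using GT c4 by (intro mult_left_mono) auto
  finally show ?thesis unfolding eps .
qed

end
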